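(* Let $T$ be a bounded operator on a Hilbert space $\mathcal{H}$ with $\|T\|\le1$, let $K$ be a compact operator on $\mathcal{H}$ with dense range, and let $A$ be a bounded operator on $\mathcal{H}$ such that $TK=KA$. If $A^n\to0$ in the weak operator topology as $n\to\infty$, then $T$ is asymptotically stable, i.e. $\|T^nx\|\to0$ as $n\to\infty$ for every $x\in\mathcal{H}$. *)

theory Defs
  imports "HOL-Analysis.Analysis"
begin

text \<open>A (real) Hilbert space is a type of class real_inner and complete_space.
  A compact operator maps the closed unit ball to a relatively compact set.\<close>
definition compact_operator :: "('a::real_normed_vector \<Rightarrow> 'b::real_normed_vector) \<Rightarrow> bool" where
  "compact_operator K \<longleftrightarrow> bounded_linear K \<and> compact (closure (K ` cball 0 1))"

definition wot_tendsto_zero :: "(nat \<Rightarrow> 'a::real_inner \<Rightarrow> 'a) \<Rightarrow> bool" where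
  "wot_tendsto_zero S \<longleftrightarrow> (\<forall>x y. (\<lambda>n. inner (S n x) y) \<longlonglongrightarrow> 0)"

end

theory Submission
  imports Defs
begin


lemma riesz_aux:
  fixes f :: "'a::{real_inner, complete_space} \<Rightarrow> real"
  assumes bl: "bounded_linear f"
  shows "\<exists>u. \<forall>w. f w = inner u w"
proof -
  obtain C where C: "\<And>x. \<bar>f x\<bar> \<le> norm x * C" and Cpos: "C > 0"
    using bounded_linear.pos_bounded[OF bl] by (metis real_norm_def)
  define Ph where "Ph w = (norm w)^2 / 2 - f w" for w
  have lb: "Ph w \<ge> -(C^2)/2" for w
  proof -
    have "\<bar>f w\<bar> \<le> norm w * C" by (rule C)
    moreover have "(norm w - C)^2 \<ge> 0" by simp
    ultimately show ?thesis unfolding Ph_def by (simp add: power2_eq_square algebra_simps)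
  qed
  define m where "m = Inf (range Ph)"
  have bdd: "bdd_below (range Ph)" using lb by (intro bdd_belowI2) auto
  have mle: "m \<le> Ph w" for w unfolding m_def by (rule cInf_lower[OF _ bdd]) auto
  have "\<exists>a. Ph a < m + 1/(Suc n)" for n
  proof (rule ccontr)
    assume "\<not> ?thesis"
    then have "m + 1/(Suc n) \<le> Inf (range Ph)" by (intro cInf_greatest) (auto simp: not_less)
    then show False unfolding m_def by (smt (verit) of_nat_0_less_iff divide_pos_pos zero_less_Suc)
  qed
  then obtain a where a: "\<And>n. Ph (a n) < m + 1/(Suc n)" by metis
  have par: "(norm (x - y))^2 = 4 * (Ph x + Ph y - 2 * Ph ((x + y) /\<^sub>R 2))" for x y
  proof -
    have l: "f ((x + y) /\<^sub>R 2) = (f x + f y)/2"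
      using bl by (simp add: linear_simps)
    show ?thesis unfolding Ph_def l
      by (simp add: power2_norm_eq_inner inner_diff_left inner_diff_right inner_add_left inner_add_right
          inner_commute algebra_simps divide_simps)
  qed
  have ineq: "(norm (a n - a k))^2 \<le> 4 * (1/Suc n + 1/Suc k)" for n k
  proof -
    have "Ph (a n) + Ph (a k) - 2 * Ph ((a n + a k) /\<^sub>R 2) \<le> 1/Suc n + 1/Suc k"
      using a[of n] a[of k] mle[of "(a n + a k) /\<^sub>R 2"] by linarith
    then show ?thesis unfolding par[of "a n" "a k"] by simp
  qed
  have "Cauchy a"
  proof (rule metric_CauchyI)
    fix e :: real assume "e > 0"
    obtain N :: nat where N: "8 / e^2 < N" using reals_Archimedean2 by blast
    have "0 < 8/e^2" using \<open>e>0\<close> by simp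
    then have Npos: "0 < real N" using N by linarith
    have N2: "8 < N * e^2" using N \<open>e>0\<close> by (simp add: pos_divide_less_eq)
    show "\<exists>M. \<forall>m\<ge>M. \<forall>n\<ge>M. dist (a m) (a n) < e"
    proof (intro exI allI impI)
      fix n k assume nk: "n \<ge> N" "k \<ge> N"
      have "1/real (Suc n) \<le> 1/N" "1/real (Suc k) \<le> 1/N" using nk Npos
        by (auto intro!: divide_left_mono)
      then have "(norm (a n - a k))^2 \<le> 8 / N" using ineq[of n k] by simp
      also have "\<dots> < e^2" using N2 Npos by (simp add: pos_divide_less_eq mult.commute)
      finally have "(norm (a n - a k))^2 < e^2" .
      then show "dist (a n) (a k) < e" using \<open>e>0\<close> by (simp add: dist_norm power_less_imp_less_base)
    qed
  qed
  then obtain u where u: "a \<longlonglongrightarrow> u" using Cauchy_convergent_iff convergent_def by blast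
  have contf: "continuous_on UNIV f" using bl linear_continuous_on by blast
  have "(\<lambda>n. Ph (a n)) \<longlonglongrightarrow> Ph u" unfolding Ph_def
    by (intro tendsto_intros u bounded_linear.tendsto[OF bl]) auto
  moreover have "(\<lambda>n. Ph (a n)) \<longlonglongrightarrow> m"
  proof (rule tendsto_sandwich[of "\<lambda>_. m" _ _ "\<lambda>n. m + 1/Suc n"])
    show "\<forall>\<^sub>F n in sequentially. m \<le> Ph (a n)" using mle by simp
    show "\<forall>\<^sub>F n in sequentially. Ph (a n) \<le> m + 1/Suc n" using a by (simp add: less_imp_le)
    show "(\<lambda>n. m + 1 / real (Suc n)) \<longlonglongrightarrow> m"
      using tendsto_add[OF tendsto_const LIMSEQ_inverse_real_of_nat] by (simp add: inverse_eq_divide)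
  qed simp
  ultimately have "Ph u = m" using LIMSEQ_unique by blast
  then have umin: "Ph u \<le> Ph w" for w using mle by simp
  show ?thesis
  proof (intro exI allI)
    fix w
    define c where "c = inner u w - f w"
    define q where "q = (norm w)^2"
    have exp: "Ph (u + t *\<^sub>R w) = Ph u + t * c + t^2/2 * q" for t
    proof -
      have n: "(norm (u + t *\<^sub>R w))^2 = (norm u)^2 + 2*t*inner u w + t^2 * q"
        unfolding q_def power2_norm_eq_inner
        by (simp add: inner_add_left inner_add_right inner_commute power2_eq_square algebra_simps)
      have l: "f (u + t *\<^sub>R w) = f u + t * f w" using bl by (simp add: linear_simps)
      show ?thesis unfolding Ph_def c_def n l by (simp add: algebra_simps)
    qed
    have q0: "q \<ge> 0" unfolding q_def by simp
    define d where "d = q + 1"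
    have d0: "d > 0" "q/2 - d < 0" unfolding d_def using q0 by auto
    define t where "t = - c / d"
    have "t * c + t^2/2 * q \<ge> 0" using umin[of "u + t *\<^sub>R w"] exp[of t] by simp
    then have "d^2 * (t * c + t^2/2 * q) \<ge> 0" by simp
    moreover have "d^2 * (t * c + t^2/2 * q) = c^2 * (q/2 - d)"
      unfolding t_def using d0 by (simp add: field_simps power2_eq_square)
    ultimately have "c^2 * (q/2 - d) \<ge> 0" by simp
    then have "c^2 \<le> 0" using d0 by (simp add: zero_le_mult_iff)
    then have "c = 0" by simp
    then show "f w = inner u w" unfolding c_def by simp
  qed
qed


lemma weak_bounded:
  fixes z :: "nat \<Rightarrow> 'a::{real_inner, complete_space}"
  assumes conv: "\<And>w. (\<lambda>n. inner (z n) w) \<longlonglongrightarrow> 0"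
  shows "\<exists>M. \<forall>n. norm (z n) \<le> M"
proof -
  define C where "C k = {w. \<forall>n. \<bar>inner (z n) w\<bar> \<le> real k}" for k :: nat
  have clo: "closed (C k)" for k
  proof -
    have "C k = (\<Inter>n. {w. \<bar>inner (z n) w\<bar> \<le> real k})" unfolding C_def by auto
    moreover have "closed {w. \<bar>inner (z n) w\<bar> \<le> real k}" for n
      by (intro closed_Collect_le continuous_intros)
    ultimately show ?thesis by auto
  qed
  have cov: "\<exists>k. w \<in> C k" for w
  proof -
    have "convergent (\<lambda>n. inner (z n) w)" using conv[of w] by (rule convergentI)
    then have "Bseq (\<lambda>n. inner (z n) w)" by (rule convergent_imp_Bseq)
    then obtain B where "\<And>n. norm (inner (z n) w) \<le> B" using BseqE by metis
    moreover obtain k :: nat where "B \<le> real k" using real_arch_simple by blast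
    ultimately show ?thesis unfolding C_def by (auto intro: order_trans)
  qed
  have "\<exists>k. euclidean interior_of (C k) \<noteq> {}"
  proof (rule ccontr)
    assume "\<not> ?thesis"
    have "euclidean interior_of \<Union>(range C) = {}"
    proof (rule Baire_category_alt)
      show "completely_metrizable_space (euclidean :: 'a topology) \<or> locally_compact_space (euclidean :: 'a topology) \<and> regular_space (euclidean :: 'a topology)"
        using completely_metrizable_space_euclidean by blast
      show "countable (range C)" by simp
      fix S assume "S \<in> range C"
      then obtain k where "S = C k" by blast
      then show "closedin euclidean S \<and> euclidean interior_of S = {}"
        using clo[of k] closed_closedin \<open>\<not> (\<exists>k. euclidean interior_of C k \<noteq> {})\<close> by blast
    qed
    moreover have "\<Union>(range C) = UNIV" using cov by auto
    ultimately show False by simp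
  qed
  then obtain k w0 where "w0 \<in> euclidean interior_of (C k)" by blast
  then obtain U where "openin euclidean U" "w0 \<in> U" "U \<subseteq> C k" unfolding interior_of_def by blast
  then have "open U" "w0 \<in> U" "U \<subseteq> C k" using open_openin by auto
  then obtain r where r0: "r > 0" and rb: "ball w0 r \<subseteq> U" using open_contains_ball by blast
  have r: "r > 0" "ball w0 r \<subseteq> C k" using r0 rb \<open>U \<subseteq> C k\<close> by auto
  show ?thesis
  proof (intro exI allI)
    fix n
    show "norm (z n) \<le> 4 * real k / r"
    proof (cases "z n = 0")
      case True then show ?thesis using r by simp
    next
      case False
      then have zp: "norm (z n) > 0" by simp
      define v where "v = (r / 2 / norm (z n)) *\<^sub>R z n"
      have "norm v = r/2" unfolding v_def using zp r by simp
      then have "dist w0 (w0 + v) < r" using r by (simp add: dist_norm)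
      then have "w0 + v \<in> C k" using r(2) by (simp add: subset_iff)
      moreover have "w0 \<in> C k" using r by (simp add: subset_iff)
      ultimately have "\<bar>inner (z n) (w0 + v)\<bar> \<le> k" "\<bar>inner (z n) w0\<bar> \<le> k" unfolding C_def by blast+
      then have "\<bar>inner (z n) v\<bar> \<le> 2 * k" unfolding inner_add_right by linarith
      moreover have "inner (z n) v = r / 2 * norm (z n)"
      proof -
        have ii: "inner (z n) (z n) = norm (z n) * norm (z n)"
          by (metis power2_norm_eq_inner power2_eq_square)
        show ?thesis unfolding v_def inner_scaleR_right ii using zp by simp
      qed
      ultimately have "r / 2 * norm (z n) \<le> 2 * k" using r zp by simp
      then have "r * norm (z n) \<le> 4 * k" by simp
      then show ?thesis using r by (simp add: pos_le_divide_eq mult.commute)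
    qed
  qed
qed

lemma compact_weak_to_norm:
  fixes K :: "'a::{real_inner, complete_space} \<Rightarrow> 'a"
  assumes cK: "compact_operator K" and bd: "\<And>n. norm (z n) \<le> M"
    and wk: "\<And>w. (\<lambda>n. inner (z n) w) \<longlonglongrightarrow> 0"
  shows "(\<lambda>n. K (z n)) \<longlonglongrightarrow> 0"
proof -
  have blK: "bounded_linear K" and cS: "compact (closure (K ` cball 0 1))"
    using cK unfolding compact_operator_def by auto
  have wkK: "(\<lambda>n. inner (K (z n)) v) \<longlonglongrightarrow> 0" for v
  proof -
    have "bounded_linear (\<lambda>w. inner (K w) v)"
      using bounded_linear_compose[OF bounded_linear_inner_left blK] .
    then obtain u where u: "\<And>w. inner (K w) v = inner u w" using riesz_aux by blast
    show ?thesis unfolding u using wk[of u] by (simp add: inner_commute)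
  qed
  define M' where "M' = \<bar>M\<bar> + 1"
  have M'pos: "M' > 0" unfolding M'_def by simp
  define y where "y n = K (z n /\<^sub>R M')" for n
  have yS: "y n \<in> closure (K ` cball 0 1)" for n
  proof -
    have "norm (z n) \<le> M'" using bd[of n] unfolding M'_def by linarith
    moreover have "norm (z n /\<^sub>R M') = norm (z n) / M'" using M'pos by (simp add: divide_inverse mult.commute)
    moreover have "norm (z n) / M' \<le> 1" using \<open>norm (z n) \<le> M'\<close> M'pos by simp
    ultimately have "norm (z n /\<^sub>R M') \<le> 1" by simp
    then have "z n /\<^sub>R M' \<in> cball 0 1" by simp
    then have "y n \<in> K ` cball 0 1" unfolding y_def by (rule imageI)
    then show ?thesis using closure_subset[of "K ` cball 0 1"] by (rule subsetD[rotated])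
  qed
  have ylin: "y n = K (z n) /\<^sub>R M'" for n unfolding y_def using blK by (simp add: linear_simps)
  have wky: "(\<lambda>n. inner (y n) v) \<longlonglongrightarrow> 0" for v
    unfolding ylin using tendsto_mult[OF tendsto_const[of "inverse M'"] wkK[of v]] by simp
  have "y \<longlonglongrightarrow> 0"
    unfolding tendsto_iff
  proof (intro allI impI)
    fix e :: real assume e: "e > 0"
    show "eventually (\<lambda>n. dist (y n) 0 < e) sequentially"
    proof (rule ccontr)
    assume ne: "\<not> eventually (\<lambda>n. dist (y n) 0 < e) sequentially"
    have "\<forall>N. \<exists>n\<ge>N. norm (y n) \<ge> e"
    proof
      fix N
      have "\<not> (\<forall>n\<ge>N. dist (y n) 0 < e)" using ne unfolding eventually_sequentially by blast
      then obtain n where "n \<ge> N" "\<not> dist (y n) 0 < e" by blast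
      then show "\<exists>n\<ge>N. norm (y n) \<ge> e" by (intro exI[of _ n]) simp
    qed
    then have "infinite {n. norm (y n) \<ge> e}"
      unfolding infinite_nat_iff_unbounded_le by simp
    from infinite_enumerate[OF this]
    have "\<exists>r::nat\<Rightarrow>nat. strict_mono r \<and> (\<forall>j. norm (y (r j)) \<ge> e)" by simp
    then obtain r :: "nat \<Rightarrow> nat" where r0: "strict_mono r" "\<forall>j. norm (y (r j)) \<ge> e" by blast
    then have r: "strict_mono r" "\<And>j. r j \<in> {n. norm (y n) \<ge> e}" by auto
    have "\<forall>j. (y \<circ> r) j \<in> closure (K ` cball 0 1)" using yS by simp
    then obtain v s where "v \<in> closure (K ` cball 0 1)" "strict_mono s" "((y \<circ> r) \<circ> s) \<longlonglongrightarrow> v"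
      by (rule seq_compactE[OF compact_imp_seq_compact[OF cS]])
    then have s: "strict_mono s" "(y \<circ> r \<circ> s) \<longlonglongrightarrow> v" by auto
    have ev: "\<forall>j. e \<le> norm ((y \<circ> r \<circ> s) j)" using r(2) by simp
    have nv: "norm v \<ge> e"
      by (rule tendsto_lowerbound[OF tendsto_norm[OF s(2)]]) (use ev in simp_all)
    have "(\<lambda>j. inner ((y \<circ> r \<circ> s) j) v) \<longlonglongrightarrow> inner v v"
      by (intro tendsto_intros s(2))
    moreover have "(\<lambda>j. inner ((y \<circ> r \<circ> s) j) v) \<longlonglongrightarrow> 0"
    proof -
      have "strict_mono (r \<circ> s)" using r(1) s(1) by (simp add: strict_mono_o)
      from LIMSEQ_subseq_LIMSEQ[OF wky[of v] this] show ?thesis by (simp add: o_def)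
    qed
    ultimately have "inner v v = 0" using LIMSEQ_unique by blast
    then show False using nv e by simp
  qed
  qed
  from tendsto_scaleR[OF tendsto_const[of M'] this]
  have "(\<lambda>n. M' *\<^sub>R y n) \<longlonglongrightarrow> 0" by simp
  moreover have "M' *\<^sub>R y n = K (z n)" for n unfolding ylin using M'pos by simp
  ultimately show ?thesis by simp
qed

theorem lemma3p2:
  fixes T K A :: "'a::{real_inner, complete_space} \<Rightarrow> 'a"
  assumes "bounded_linear T" and "onorm T \<le> 1"
    and "compact_operator K" and "closure (range K) = UNIV"
    and "bounded_linear A"
    and "T \<circ> K = K \<circ> A"
    and "wot_tendsto_zero (\<lambda>n. A ^^ n)"
  shows "\<forall>x. (\<lambda>n. norm ((T ^^ n) x)) \<longlonglongrightarrow> 0"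
proof
  fix x
  have contr: "norm ((T ^^ n) a - (T ^^ n) b) \<le> norm (a - b)" for n a b
  proof (induction n)
    case (Suc n)
    have "norm ((T ^^ Suc n) a - (T ^^ Suc n) b) = norm (T ((T ^^ n) a - (T ^^ n) b))"
      using assms(1) by (simp add: linear_simps)
    also have "\<dots> \<le> onorm T * norm ((T ^^ n) a - (T ^^ n) b)" using onorm[OF assms(1)] .
    also have "\<dots> \<le> 1 * norm ((T ^^ n) a - (T ^^ n) b)"
      using assms(2) by (intro mult_right_mono) auto
    finally show ?case using Suc by simp
  qed simp
  have comm: "(T ^^ n) (K y) = K ((A ^^ n) y)" for n y
  proof (induction n)
    case (Suc n)
    have "T (K z) = K (A z)" for z using assms(6) by (metis comp_apply)
    then show ?case using Suc by simp
  qed simp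
  have lim: "(\<lambda>n. norm ((T ^^ n) (K y))) \<longlonglongrightarrow> 0" for y
  proof -
    have wk: "(\<lambda>n. inner ((A ^^ n) y) w) \<longlonglongrightarrow> 0" for w
      using assms(7) unfolding wot_tendsto_zero_def by blast
    obtain M where "\<forall>n. norm ((A ^^ n) y) \<le> M" using weak_bounded[OF wk] by blast
    then have "(\<lambda>n. K ((A ^^ n) y)) \<longlonglongrightarrow> 0"
      by (intro compact_weak_to_norm[OF assms(3) _ wk]) auto
    then show ?thesis unfolding comm using tendsto_norm_zero by blast
  qed
  show "(\<lambda>n. norm ((T ^^ n) x)) \<longlonglongrightarrow> 0"
  proof (rule LIMSEQ_I)
    fix e :: real assume e: "e > 0"
    have "x \<in> closure (range K)" using assms(4) by simp
    then obtain y' where "y' \<in> range K" "dist y' x < e/2" using e unfolding closure_approachable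
      by (meson half_gt_zero)
    then obtain y where y: "dist (K y) x < e/2" by blast
    obtain N where N0: "\<forall>n\<ge>N. norm (norm ((T ^^ n) (K y)) - 0) < e/2"
      using LIMSEQ_D[OF lim[of y], of "e/2"] e by auto
    then have N: "\<And>n. n \<ge> N \<Longrightarrow> norm (norm ((T ^^ n) (K y)) - 0) < e/2" by blast
    show "\<exists>N. \<forall>n\<ge>N. norm (norm ((T ^^ n) x) - 0) < e"
    proof (intro exI allI impI)
      fix n assume "n \<ge> N"
      have "norm ((T ^^ n) x) \<le> norm ((T ^^ n) x - (T ^^ n) (K y)) + norm ((T ^^ n) (K y))"
        using norm_triangle_ineq[of "(T ^^ n) x - (T ^^ n) (K y)" "(T ^^ n) (K y)"] by simp
      also have "\<dots> < e/2 + e/2"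
        using contr[of n x "K y"] y N[OF \<open>n \<ge> N\<close>] by (simp add: dist_norm norm_minus_commute)
      finally show "norm (norm ((T ^^ n) x) - 0) < e" by simp
    qed
  qed
qed

end
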